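(* Let $c_2,c_3$ be constants and $\mu(t)=t^2+c_2t+c_3$. Let $\{P_n\}_{n\ge0}$ be a sequence of monic orthogonal polynomials in the lattice $\mu(t)$ with three-term recurrence relation $\mu(t)P_n=P_{n+1}+\beta_nP_n+\gamma_nP_{n-1}$ ($P_{-1}=0$, $P_0=1$, $\gamma_n\ne0$). Let $L$ be the infinite tridiagonal matrix with $L_{n,n}=\beta_n$, $L_{n,n+1}=1$, $L_{n,n-1}=\gamma_n$, and let $M$ be the infinite tridiagonal matrix with $M_{n,n}=\beta'_n$, $M_{n,n+1}=1$, $M_{n,n-1}=\gamma'_n$, where $\beta'_n,\gamma'_n$ are the three-term recurrence coefficients of the sequence of divided differences, $\mu(t)Q_n=Q_{n+1}+\beta'_nQ_n+\gamma'_nQ_{n-1}$ with $Q_n=P'_{n+1}$. Let $D$ be the infinite matrix with $D_{n+1,n}=n+1$ ($n\ge0$) and all other entries zero. Then $\{P_n\}$ is a sequence of classical orthogonal polynomials on the quadratic lattice $\mu(t)$ if and only if $$L^2D-2LDM+DM^2-\frac12\,(LD+DM)+\Big(c_3+\frac1{16}-\frac{c_2^2}{4}\Big)D=0 .$$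
   Context: The divided-difference operator is $\mathbb{D}f(t)=\frac{f(t+1/2)-f(t-1/2)}{\mu(t+1/2)-\mu(t-1/2)}$; it maps polynomials of degree $n$ in $\mu(t)$ to polynomials of degree $n-1$ in $\mu(t)$. A sequence of monic polynomials $\{R_n\}$ in $\mu(t)$ ($\deg R_n=n$) is orthogonal if it satisfies $\mu(t)R_n=R_{n+1}+b_nR_n+c_nR_{n-1}$, $R_{-1}=0$, $R_0=1$, with $c_n\neq0$. Set $P'_n=\frac1n\mathbb{D}P_n$ for $n\ge1$. The sequence $\{P_n\}$ is called classical if $\{P'_n\}_{n\ge1}$ is also a sequence of monic orthogonal polynomials in $\mu(t)$. Indices of infinite matrices start at $0$; products of these banded infinite matrices are well defined. *)

theory Defs
  imports "HOL-Computational_Algebra.Polynomial"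
begin

text \<open>A polynomial in the lattice mu(t) = t^2 + c2 t + c3 is represented by a polynomial
  p in one variable x, standing for the function t \<mapsto> p(mu(t)).\<close>

definition mu_poly :: "'a::field_char_0 \<Rightarrow> 'a \<Rightarrow> 'a poly" where
  "mu_poly c2 c3 = [:c3, c2, 1:]"

definition mu_shift :: "'a::field_char_0 \<Rightarrow> 'a \<Rightarrow> 'a \<Rightarrow> 'a poly" where
  "mu_shift c2 c3 h = pcompose (mu_poly c2 c3) [:h, 1:]"

definition Ddiff :: "'a::field_char_0 \<Rightarrow> 'a \<Rightarrow> 'a poly \<Rightarrow> 'a poly" where
  "Ddiff c2 c3 p = (THE q. pcompose q (mu_poly c2 c3) *
        (mu_shift c2 c3 (1/2) - mu_shift c2 c3 (-1/2))
      = pcompose p (mu_shift c2 c3 (1/2)) - pcompose p (mu_shift c2 c3 (-1/2)))"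

definition Pprime :: "'a::field_char_0 \<Rightarrow> 'a \<Rightarrow> (nat \<Rightarrow> 'a poly) \<Rightarrow> nat \<Rightarrow> 'a poly" where
  "Pprime c2 c3 P n = smult (1 / of_nat n) (Ddiff c2 c3 (P n))"

definition ttrr :: "(nat \<Rightarrow> 'a::field_char_0 poly) \<Rightarrow> (nat \<Rightarrow> 'a) \<Rightarrow> (nat \<Rightarrow> 'a) \<Rightarrow> bool" where
  "ttrr R b c \<longleftrightarrow> R 0 = 1 \<and>
     (\<forall>n. [:0, 1:] * R n = R (Suc n) + smult (b n) (R n)
            + smult (c n) (if n = 0 then 0 else R (n - 1)))"

definition monic_seq :: "(nat \<Rightarrow> 'a::field_char_0 poly) \<Rightarrow> bool" where
  "monic_seq R \<longleftrightarrow> (\<forall>n. degree (R n) = n \<and> lead_coeff (R n) = 1)"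

definition orthogonal_seq :: "(nat \<Rightarrow> 'a::field_char_0 poly) \<Rightarrow> bool" where
  "orthogonal_seq R \<longleftrightarrow> monic_seq R \<and>
     (\<exists>b c. ttrr R b c \<and> (\<forall>n\<ge>1. c n \<noteq> 0))"

definition classical :: "'a::field_char_0 \<Rightarrow> 'a \<Rightarrow> (nat \<Rightarrow> 'a poly) \<Rightarrow> bool" where
  "classical c2 c3 P \<longleftrightarrow> orthogonal_seq (\<lambda>n. Pprime c2 c3 P (Suc n))"

text \<open>Infinite matrices indexed from 0. Product summing over the (finite, for the
  banded matrices considered) support of row i of A.\<close>
type_synonym 'a imat = "nat \<Rightarrow> nat \<Rightarrow> 'a"

definition imult :: "'a::field_char_0 imat \<Rightarrow> 'a imat \<Rightarrow> 'a imat" where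
  "imult A B = (\<lambda>i j. \<Sum>k | A i k \<noteq> 0. A i k * B k j)"

definition tridiag :: "(nat \<Rightarrow> 'a::field_char_0) \<Rightarrow> (nat \<Rightarrow> 'a) \<Rightarrow> 'a imat" where
  "tridiag b c = (\<lambda>n m. if m = n then b n else if m = Suc n then 1
                         else if Suc m = n then c n else 0)"

definition Dmat :: "'a::field_char_0 imat" where
  "Dmat = (\<lambda>n m. if n = Suc m then of_nat n else 0)"

end

theory Submission
  imports Defs
begin


definition dstep :: "'a::field_char_0 \<Rightarrow> 'a \<Rightarrow> 'a \<Rightarrow> 'a poly \<times> 'a poly \<Rightarrow> 'a poly \<times> 'a poly" where
  "dstep c2 c3 a ds = ([:1/4,1:] * fst ds + snd ds,
     [:a:] + [:1/4,1:] * snd ds + [:-(c3 - c2^2/4),1:] * fst ds)"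

definition dsf :: "'a::field_char_0 \<Rightarrow> 'a \<Rightarrow> 'a poly \<Rightarrow> 'a poly \<times> 'a poly" where
  "dsf c2 c3 p = fold_coeffs (dstep c2 c3) p (0,0)"

lemma dsf_pCons: "dsf c2 c3 (pCons a p) = dstep c2 c3 a (dsf c2 c3 p)"
proof (cases "p = 0 \<and> a = 0")
  case True
  then show ?thesis by (simp add: dsf_def dstep_def)
next
  case False
  then show ?thesis by (auto simp: dsf_def)
qed

lemma mshift_p: "mu_shift c2 c3 (1/2) = mu_poly c2 c3 + [:1/4:] + [:c2/2, 1:]"
  by (simp add: mu_shift_def mu_poly_def pcompose_pCons field_simps)
lemma mshift_m: "mu_shift c2 c3 (-1/2) = mu_poly c2 c3 + [:1/4:] - [:c2/2, 1:]"
  by (simp add: mu_shift_def mu_poly_def pcompose_pCons field_simps)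
lemma s_sq: "[:c2/2, 1:] * [:c2/2, 1:] = mu_poly c2 c3 - [:c3 - c2^2/4:]"
  by (simp add: mu_poly_def field_simps power2_eq_square)
lemma pc_X: "pcompose [:a, 1:] q = [:a:] + (q::'a::field_char_0 poly)"
  by (simp add: pcompose_pCons smult_1_left)

lemma smult2: "smult 2 p = 2 * (p::'a::field_char_0 poly)"
proof -
  have "smult 2 p = p + p" unfolding poly_eq_iff coeff_add coeff_smult by simp
  also have "\<dots> = 2 * p" by (rule mult_2[symmetric])
  finally show ?thesis .
qed

lemma smult_a2: "smult a (2::'a::field_char_0 poly) = [:2*a:]"
proof -
  have "smult a (2::'a poly) = smult a (1 + 1)" by (simp only: one_add_one)
  also have "\<dots> = [:a:] + [:a:]" by (simp only: smult_add_right smult_one)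
  also have "\<dots> = [:2*a:]" by (simp only: add_pCons add_0 mult_2)
  finally show ?thesis .
qed

lemma dsf_char:
  fixes c2 c3 :: "'a::field_char_0"
  defines "m \<equiv> mu_poly c2 c3" and "mp \<equiv> mu_shift c2 c3 (1/2)" and "mm \<equiv> mu_shift c2 c3 (-1/2)"
  shows "pcompose (fst (dsf c2 c3 p)) m * (mp - mm) = pcompose p mp - pcompose p mm
       \<and> smult 2 (pcompose (snd (dsf c2 c3 p)) m) = pcompose p mp + pcompose p mm"
proof (induction p)
  case 0
  then show ?case by (simp add: dsf_def)
next
  case (pCons a p)
  define d where "d = pcompose (fst (dsf c2 c3 p)) m"
  define s where "s = pcompose (snd (dsf c2 c3 p)) m"
  define A where "A = pcompose p mp"
  define B where "B = pcompose p mm"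
  define y where "y = m + [:1/4:]"
  define S where "S = [:c2/2, 1 :: 'a:]"
  have mp: "mp = y + S" unfolding mp_def y_def S_def m_def using mshift_p[of c2 c3] by simp
  have mm: "mm = y - S" unfolding mm_def y_def S_def m_def using mshift_m[of c2 c3] by simp
  have ss: "S * S = m - [:c3 - c2^2/4:]" unfolding S_def m_def by (rule s_sq)
  have w: "mp - mm = smult 2 S"
  proof -
    have "smult 2 S = S + S" unfolding poly_eq_iff coeff_add coeff_smult by simp
    then show ?thesis by (simp add: mp mm)
  qed
  have IH1: "d * (smult 2 S) = A - B" using pCons.IH unfolding d_def A_def B_def w[symmetric]
    by simp
  have IH2: "smult 2 s = A + B" using pCons.IH unfolding s_def A_def B_def by simp
  have e1: "pcompose (fst (dsf c2 c3 (pCons a p))) m = y * d + s"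
    unfolding dsf_pCons dstep_def fst_conv snd_conv pcompose_add pcompose_mult pc_X
    by (simp add: d_def s_def y_def algebra_simps)
  have e2: "pcompose (snd (dsf c2 c3 (pCons a p))) m = [:a:] + y * s + (m - [:c3 - c2^2/4:]) * d"
    unfolding dsf_pCons dstep_def fst_conv snd_conv pcompose_add pcompose_mult pc_X pcompose_const
    by (simp add: d_def s_def y_def algebra_simps flip: smult_add_left)
  have "pcompose (pCons a p) mp - pcompose (pCons a p) mm = (y+S) * A - (y - S) * B"
    by (simp add: pcompose_pCons A_def B_def mp mm)
  also have "\<dots> = y * (A - B) + S * (A + B)" by (simp add: algebra_simps)
  also have "\<dots> = (y * d + s) * (mp - mm)"
    by (simp add: IH1[symmetric] IH2[symmetric] w smult2 algebra_simps)
  finally have g1: "pcompose (pCons a p) mp - pcompose (pCons a p) mm = (y * d + s) * (mp - mm)" .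
  have "pcompose (pCons a p) mp + pcompose (pCons a p) mm = [:a:] + [:a:] + (y+S) * A + (y - S) * B"
    by (simp add: pcompose_pCons A_def B_def mp mm) (metis smult_a2 mult.commute)
  also have "\<dots> = [:a:] + [:a:] + y * (A + B) + S * (A - B)" by (simp add: algebra_simps)
  also have "\<dots> = [:a:] + [:a:] + y * smult 2 s + smult 2 (S * S) * d"
    by (simp add: IH1[symmetric] IH2[symmetric] smult2 algebra_simps)
  also have "\<dots> = smult 2 ([:a:] + y * s + (m - [:c3 - c2^2/4:]) * d)"
    by (simp add: ss smult2 algebra_simps) (metis smult_a2 mult.commute)
  finally show ?case using g1 e1 e2 by simp
qed


lemma w_nz: "mu_shift c2 c3 (1/2) - mu_shift c2 c3 (-1/2) \<noteq> (0::'a::field_char_0 poly)"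
proof -
  have "mu_shift c2 c3 (1/2) - mu_shift c2 c3 (-1/2) = [:c2, 2::'a:]"
    using mshift_p[of c2 c3] mshift_m[of c2 c3] by simp
  then show ?thesis by simp
qed

lemma Ddiff_unique:
  fixes c2 c3 :: "'a::field_char_0"
  assumes "pcompose q (mu_poly c2 c3) * (mu_shift c2 c3 (1/2) - mu_shift c2 c3 (-1/2))
      = pcompose p (mu_shift c2 c3 (1/2)) - pcompose p (mu_shift c2 c3 (-1/2))"
  shows "Ddiff c2 c3 p = q"
  unfolding Ddiff_def
proof (rule the_equality)
  show "pcompose q (mu_poly c2 c3) * (mu_shift c2 c3 (1/2) - mu_shift c2 c3 (-1/2))
      = pcompose p (mu_shift c2 c3 (1/2)) - pcompose p (mu_shift c2 c3 (-1/2))" by (rule assms)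
next
  fix r
  assume r: "pcompose r (mu_poly c2 c3) * (mu_shift c2 c3 (1/2) - mu_shift c2 c3 (-1/2))
      = pcompose p (mu_shift c2 c3 (1/2)) - pcompose p (mu_shift c2 c3 (-1/2))"
  have "pcompose (r - q) (mu_poly c2 c3) * (mu_shift c2 c3 (1/2) - mu_shift c2 c3 (-1/2)) = 0"
    unfolding pcompose_diff left_diff_distrib r assms by simp
  then have "pcompose (r - q) (mu_poly c2 c3) = 0" using w_nz[of c2 c3] by simp
  then have "r - q = 0" by (rule pcompose_eq_0) (simp add: mu_poly_def)
  then show "r = q" by simp
qed

lemma Ddiff_dsf: "Ddiff c2 c3 p = fst (dsf c2 c3 p)"
  by (rule Ddiff_unique) (use dsf_char in blast)

lemma Ddiff_char: "pcompose (Ddiff c2 c3 p) (mu_poly c2 c3) * (mu_shift c2 c3 (1/2) - mu_shift c2 c3 (-1/2))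
      = pcompose p (mu_shift c2 c3 (1/2)) - pcompose p (mu_shift c2 c3 (-1/2))"
  unfolding Ddiff_dsf using dsf_char by blast

lemma Ddiff_char2: "pcompose (Ddiff c2 c3 p) (mu_poly c2 c3) * (mu_shift c2 c3 (1/2) - mu_shift c2 c3 (-(1/2)))
      = pcompose p (mu_shift c2 c3 (1/2)) - pcompose p (mu_shift c2 c3 (-(1/2)))"
  using Ddiff_char[of c2 c3 p] by simp

lemma Ddiff_lin:
  fixes c2 c3 :: "'a::field_char_0"
  shows "Ddiff c2 c3 (\<Sum>k\<in>S. smult (c k) (v k)) = (\<Sum>k\<in>S. smult (c k) (Ddiff c2 c3 (v k)))"
  apply (rule Ddiff_unique)
  apply (simp add: pcompose_sum pcompose_smult sum_distrib_right Ddiff_char2 smult_diff_right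
      sum_subtractf)
  done

lemma Ddiff_one: "Ddiff c2 c3 (1::'a::field_char_0 poly) = 0"
  unfolding Ddiff_dsf one_pCons dsf_pCons by (simp add: dstep_def dsf_def)

lemma X_mult: "[:0,1:] * p = pCons 0 (p::'a::field_char_0 poly)"
  by simp

lemma two_poly: "[:2:] = (2::'a::field_char_0 poly)"
  using smult_a2[of 1] by simp

lemma smult_conv: "smult c p = [:c:] * p"
  by simp

lemma Ddiff_identity:
  fixes c2 c3 :: "'a::field_char_0"
  defines "X \<equiv> [:0, 1::'a:]"
  shows "Ddiff c2 c3 (X * (X * p)) - smult 2 (X * Ddiff c2 c3 (X * p)) + X * (X * Ddiff c2 c3 p)
     - smult (1/2) (Ddiff c2 c3 (X * p) + X * Ddiff c2 c3 p)
     + smult (c3 + 1/16 - c2^2/4) (Ddiff c2 c3 p) = 0"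
proof -
  define d where "d = fst (dsf c2 c3 p)"
  define s where "s = snd (dsf c2 c3 p)"
  define Y where "Y = [:1/4, 1::'a:]"
  define K where "K = [:-(c3 - c2^2/4), 1::'a:]"
  have e1: "Ddiff c2 c3 (X * p) = Y * d + s"
    unfolding Ddiff_dsf X_def X_mult dsf_pCons dstep_def d_def s_def Y_def by simp
  have e1': "snd (dsf c2 c3 (X * p)) = Y * s + K * d"
    unfolding Ddiff_dsf X_def X_mult dsf_pCons dstep_def d_def s_def Y_def K_def by simp
  have e2: "Ddiff c2 c3 (X * (X * p)) = Y * (Y * d + s) + (Y * s + K * d)"
    unfolding Ddiff_dsf X_def X_mult dsf_pCons dstep_def d_def s_def Y_def K_def
    by (simp add: e1[unfolded Ddiff_dsf X_def X_mult dsf_pCons dstep_def d_def s_def Y_def] 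
      e1'[unfolded X_def X_mult dsf_pCons dstep_def d_def s_def Y_def K_def])
  have c1: "Y * Y + K - [:2:] * X * Y + X * X - [:1/2:] * (Y + X) + [:c3 + 1/16 - c2^2/4:] = 0"
    unfolding X_def Y_def K_def by (simp add: field_simps)
  have c2: "[:2:] * Y - [:2:] * X - [:1/2:] = 0"
    unfolding X_def Y_def K_def by (simp add: field_simps)
  have "Ddiff c2 c3 (X * (X * p)) - smult 2 (X * Ddiff c2 c3 (X * p)) + X * (X * Ddiff c2 c3 p)
     - smult (1/2) (Ddiff c2 c3 (X * p) + X * Ddiff c2 c3 p)
     + smult (c3 + 1/16 - c2^2/4) (Ddiff c2 c3 p)
     = (Y * Y + K - [:2:] * X * Y + X * X - [:1/2:] * (Y + X) + [:c3 + 1/16 - c2^2/4:]) * d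
       + ([:2:] * Y - [:2:] * X - [:1/2:]) * s"
    unfolding e2 unfolding e1 unfolding smult_conv Ddiff_dsf d_def[symmetric]
    by (simp del: mult_pCons_left mult_pCons_right add: algebra_simps two_poly)
  then show ?thesis using c1 c2 by simp
qed



definition supp :: "'a::field_char_0 imat \<Rightarrow> nat \<Rightarrow> nat set" where
  "supp A i = {k. A i k \<noteq> 0}"

definition act :: "'a::field_char_0 imat \<Rightarrow> (nat \<Rightarrow> 'a poly) \<Rightarrow> nat \<Rightarrow> 'a poly" where
  "act A v i = (\<Sum>k\<in>supp A i. smult (A i k) (v k))"

definition rowfin :: "'a::field_char_0 imat \<Rightarrow> bool" where
  "rowfin A \<longleftrightarrow> (\<forall>i. finite (supp A i))"

lemma smult_sum_right: "smult a (sum f S) = (\<Sum>i\<in>S. smult a (f i))"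
  by (induct S rule: infinite_finite_induct) (auto simp: smult_add_right)

lemma act_sup: "finite S \<Longrightarrow> supp A i \<subseteq> S \<Longrightarrow> act A v i = (\<Sum>k\<in>S. smult (A i k) (v k))"
  unfolding act_def by (rule sum.mono_neutral_left) (auto simp: supp_def)

lemma imult_sup:
  assumes "finite (supp A i)" "finite S" "\<forall>k. k \<notin> S \<longrightarrow> A i k * B k j = 0"
  shows "imult A B i j = (\<Sum>k\<in>S. A i k * B k j)"
proof -
  have "imult A B i j = (\<Sum>k\<in>supp A i \<union> S. A i k * B k j)"
    unfolding imult_def supp_def[symmetric]
    by (rule sum.mono_neutral_left) (use assms in \<open>auto simp: supp_def\<close>)
  also have "\<dots> = (\<Sum>k\<in>S. A i k * B k j)"
    by (rule sum.mono_neutral_right) (use assms in auto)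
  finally show ?thesis .
qed

lemma supp_imult: "supp (imult A B) i \<subseteq> (\<Union>k\<in>supp A i. supp B k)"
proof
  fix j assume "j \<in> supp (imult A B) i"
  then have "(\<Sum>k | A i k \<noteq> 0. A i k * B k j) \<noteq> 0" by (simp add: supp_def imult_def)
  then obtain k where "k \<in> {k. A i k \<noteq> 0}" "A i k * B k j \<noteq> 0"
    by (rule sum.not_neutral_contains_not_neutral)
  then show "j \<in> (\<Union>k\<in>supp A i. supp B k)" by (auto simp: supp_def)
qed

lemma rowfin_imult: "rowfin A \<Longrightarrow> rowfin B \<Longrightarrow> rowfin (imult A B)"
  unfolding rowfin_def
proof
  fix i assume "\<forall>i. finite (supp A i)" "\<forall>i. finite (supp B i)"
  then have "finite (\<Union>k\<in>supp A i. supp B k)" by (simp add: finite_UN_I)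
  then show "finite (supp (imult A B) i)" by (rule finite_subset[OF supp_imult])
qed

lemma act_imult:
  assumes A: "rowfin A" and B: "rowfin B"
  shows "act (imult A B) v i = act A (act B v) i"
proof -
  define T where "T = (\<Union>k\<in>supp A i. supp B k)"
  have fT: "finite T" using A B unfolding T_def rowfin_def by (simp add: finite_UN_I)
  have "act (imult A B) v i = (\<Sum>j\<in>T. smult (imult A B i j) (v j))"
    by (rule act_sup[OF fT]) (simp add: T_def supp_imult)
  also have "\<dots> = (\<Sum>j\<in>T. \<Sum>k\<in>supp A i. smult (A i k) (smult (B k j) (v j)))"
    unfolding imult_def supp_def smult_sum by (simp add: smult_sum)
  also have "\<dots> = (\<Sum>k\<in>supp A i. smult (A i k) (\<Sum>j\<in>T. smult (B k j) (v j)))"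
    by (subst sum.swap) (simp add: smult_sum_right)
  also have "\<dots> = (\<Sum>k\<in>supp A i. smult (A i k) (act B v k))"
  proof (rule sum.cong[OF refl])
    fix k assume "k \<in> supp A i"
    then have "supp B k \<subseteq> T" by (auto simp: T_def)
    then show "smult (A i k) (\<Sum>j\<in>T. smult (B k j) (v j)) = smult (A i k) (act B v k)"
      using act_sup[OF fT, of B k v] by simp
  qed
  also have "\<dots> = act A (act B v) i" by (simp add: act_def)
  finally show ?thesis .
qed



lemma act_mult: "act A (\<lambda>k. p * v k) i = p * act A v i"
  by (simp add: act_def sum_distrib_left)

lemma act_Ddiff: "act A (\<lambda>k. Ddiff c2 c3 (v k)) i = Ddiff c2 c3 (act A v i)"
  by (simp add: act_def Ddiff_lin)

lemma act_comb:
  assumes "rowfin A" "rowfin B"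
  shows "act (\<lambda>i j. A i j + B i j) v i = act A v i + act B v i"
    and "act (\<lambda>i j. A i j - B i j) v i = act A v i - act B v i"
    and "act (\<lambda>i j. c * A i j) v i = smult c (act A v i)"
proof -
  define S where "S = supp A i \<union> supp B i"
  have fS: "finite S" using assms by (simp add: S_def rowfin_def)
  have a: "act A v i = (\<Sum>k\<in>S. smult (A i k) (v k))" by (rule act_sup[OF fS]) (auto simp: S_def)
  have b: "act B v i = (\<Sum>k\<in>S. smult (B i k) (v k))" by (rule act_sup[OF fS]) (auto simp: S_def)
  show "act (\<lambda>i j. A i j + B i j) v i = act A v i + act B v i"
    by (subst act_sup[OF fS]) (auto simp: S_def supp_def a b smult_add_left sum.distrib)
  show "act (\<lambda>i j. A i j - B i j) v i = act A v i - act B v i"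
    by (subst act_sup[OF fS]) (auto simp: S_def supp_def a b smult_diff_left sum_subtractf)
  show "act (\<lambda>i j. c * A i j) v i = smult c (act A v i)"
    by (subst act_sup[OF fS]) (auto simp: S_def supp_def a smult_sum_right)
qed

lemma rowfin_comb:
  assumes "rowfin A" "rowfin B"
  shows "rowfin (\<lambda>i j. A i j + B i j)" "rowfin (\<lambda>i j. A i j - B i j)" "rowfin (\<lambda>i j. c * A i j)"
proof -
  have fA: "finite (supp A i)" and fB: "finite (supp B i)" for i
    using assms unfolding rowfin_def by auto
  have "supp (\<lambda>i j. A i j + B i j) i \<subseteq> supp A i \<union> supp B i" for i
    by (auto simp: supp_def)
  then show "rowfin (\<lambda>i j. A i j + B i j)" unfolding rowfin_def
    using fA fB by (meson finite_UnI finite_subset)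
  have "supp (\<lambda>i j. A i j - B i j) i \<subseteq> supp A i \<union> supp B i" for i
    by (auto simp: supp_def)
  then show "rowfin (\<lambda>i j. A i j - B i j)" unfolding rowfin_def
    using fA fB by (meson finite_UnI finite_subset)
  have "supp (\<lambda>i j. c * A i j) i \<subseteq> supp A i" for i
    by (auto simp: supp_def)
  then show "rowfin (\<lambda>i j. c * A i j)" unfolding rowfin_def
    using fA by (meson finite_subset)
qed

definition band :: "int \<Rightarrow> int \<Rightarrow> 'a::field_char_0 imat \<Rightarrow> bool" where
  "band lo hi A \<longleftrightarrow> (\<forall>i k. A i k \<noteq> 0 \<longrightarrow> lo \<le> int i - int k \<and> int i - int k \<le> hi)"

lemma band_rowfin: "band lo hi A \<Longrightarrow> rowfin A"
  unfolding rowfin_def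
proof
  fix i assume b: "band lo hi A"
  have "supp A i \<subseteq> {..i + nat (- lo)}"
  proof
    fix k assume "k \<in> supp A i"
    then have "lo \<le> int i - int k" using b by (auto simp: supp_def band_def)
    then show "k \<in> {..i + nat (- lo)}" by simp
  qed
  then show "finite (supp A i)" using finite_subset by blast
qed

lemma band_imult: "band a b A \<Longrightarrow> band c d B \<Longrightarrow> band (a + c) (b + d) (imult A B)"
  unfolding band_def
proof (intro allI impI)
  fix i k assume A: "\<forall>i k. A i k \<noteq> 0 \<longrightarrow> a \<le> int i - int k \<and> int i - int k \<le> b"
    and B: "\<forall>i k. B i k \<noteq> 0 \<longrightarrow> c \<le> int i - int k \<and> int i - int k \<le> d"
    and nz: "imult A B i k \<noteq> 0"
  then have "k \<in> supp (imult A B) i" by (simp add: supp_def)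
  then obtain l where "l \<in> supp A i" "k \<in> supp B l" using supp_imult by blast
  then show "a + c \<le> int i - int k \<and> int i - int k \<le> b + d"
    using A B by (force simp: supp_def)
qed

lemma band_tridiag: "band (-1) 1 (tridiag b c)"
  by (auto simp: band_def tridiag_def split: if_splits)

lemma band_Dmat: "band 1 1 (Dmat :: 'a::field_char_0 imat)"
  by (auto simp: band_def Dmat_def split: if_splits)

lemma act_tridiag: "act (tridiag b c) v i =
   v (Suc i) + smult (b i) (v i) + smult (c i) (if i = 0 then 0 else v (i - 1))"
proof (cases i)
  case 0
  have "act (tridiag b c) v i = (\<Sum>k\<in>{0, Suc 0}. smult (tridiag b c i k) (v k))"
    by (rule act_sup) (auto simp: supp_def tridiag_def 0)
  then show ?thesis by (simp add: tridiag_def 0)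
next
  case (Suc n)
  have "act (tridiag b c) v i = (\<Sum>k\<in>{n, Suc n, Suc (Suc n)}. smult (tridiag b c i k) (v k))"
    by (rule act_sup) (auto simp: supp_def tridiag_def Suc)
  then show ?thesis by (simp add: tridiag_def Suc)
qed

lemma act_Dmat: "act Dmat v i = (if i = 0 then 0 else smult (of_nat i) (v (i - 1)))"
proof (cases i)
  case 0
  have "act Dmat v i = (\<Sum>k\<in>{}. smult (Dmat i k) (v k))"
    by (rule act_sup) (auto simp: supp_def Dmat_def 0)
  then show ?thesis by (simp add: 0)
next
  case (Suc n)
  have "act Dmat v i = (\<Sum>k\<in>{n}. smult (Dmat i k) (v k))"
    by (rule act_sup) (auto simp: supp_def Dmat_def Suc)
  then show ?thesis by (simp add: Dmat_def Suc)
qed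

lemma ttrr_monic:
  assumes "ttrr R b c" shows "monic_seq R"
proof -
  have R0: "R 0 = 1" and rec: "\<And>n. [:0, 1:] * R n = R (Suc n) + smult (b n) (R n)
            + smult (c n) (if n = 0 then 0 else R (n - 1))" using assms by (auto simp: ttrr_def)
  have "degree (R n) = n \<and> lead_coeff (R n) = 1" for n
  proof (induction n rule: less_induct)
    case (less n)
    show ?case
    proof (cases n)
      case 0 then show ?thesis by (simp add: R0)
    next
      case (Suc m)
      define r where "r = smult (b m) (R m) + smult (c m) (if m = 0 then 0 else R (m - 1))"
      have dlm: "degree (R m) = m \<and> lead_coeff (R m) = 1" using less.IH[of m] Suc by blast
      have dm: "degree (R m) = m" using dlm by (rule conjunct1)
      have lm: "lead_coeff (R m) = 1" using dlm by (rule conjunct2)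
      have "degree (R (m - 1)) \<le> m" using less[of "m - 1"] Suc by (cases m) auto
      then have dr: "degree r \<le> m" unfolding r_def
        by (intro degree_add_le) (auto intro: order_trans[OF degree_smult_le] simp: dm)
      have eq: "R n = pCons 0 (R m) + - r" using rec[of m] by (simp add: r_def Suc algebra_simps)
      have Rm0: "R m \<noteq> 0" using lm by auto
      have dp: "degree (pCons 0 (R m)) = Suc m" using Rm0 dm by simp
      have dd: "degree (pCons 0 (R m) + - r) = Suc m"
        using dp dr by (subst degree_add_eq_left) auto
      have "coeff (pCons 0 (R m) + - r) (Suc m) = 1"
        using lm dm dr by (simp add: coeff_eq_0)
      then show ?thesis using eq dd Suc by simp
    qed
  qed
  then show ?thesis unfolding monic_seq_def by blast
qed

lemma indep:
  assumes "monic_seq Q"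
  shows "(\<Sum>k<N. smult (c k) (Q k)) = 0 \<Longrightarrow> k < N \<Longrightarrow> c k = 0"
proof (induction N arbitrary: k)
  case 0 then show ?case by simp
next
  case (Suc N)
  have dq0: "degree (Q k) = k \<and> lead_coeff (Q k) = 1" for k using assms unfolding monic_seq_def by blast
  have dq: "degree (Q k) = k" "lead_coeff (Q k) = 1" for k using dq0[of k] by auto
  have "coeff (\<Sum>k<N. smult (c k) (Q k)) N = 0"
    unfolding coeff_sum by (rule sum.neutral) (auto simp: coeff_eq_0 dq)
  then have cN: "c N = 0" using arg_cong[OF Suc.prems(1), of "\<lambda>p. coeff p N"] dq[of N]
    by (simp add: coeff_sum)
  then have "(\<Sum>k<N. smult (c k) (Q k)) = 0" using Suc.prems(1) by simp
  then show ?case using Suc cN by (cases "k = N") auto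
qed



lemma band_zero: "band lo hi A \<Longrightarrow> \<not> (lo \<le> int i - int j \<and> int i - int j \<le> hi) \<Longrightarrow> A i j = 0"
  unfolding band_def by blast

lemma imult_single:
  assumes bA: "band a b A" and bB: "band c d B"
    and u: "\<forall>k. k \<noteq> l \<longrightarrow> \<not> (a \<le> int i - int k \<and> int i - int k \<le> b \<and> c \<le> int k - int j \<and> int k - int j \<le> d)"
  shows "imult A B i j = A i l * B l j"
proof -
  have "imult A B i j = (\<Sum>k\<in>{l}. A i k * B k j)"
  proof (rule imult_sup)
    show "finite (supp A i)" using band_rowfin[OF bA] by (simp add: rowfin_def)
    show "\<forall>k. k \<notin> {l} \<longrightarrow> A i k * B k j = 0"
    proof (intro allI impI)
      fix k assume "k \<notin> {l}"
      then have "A i k = 0 \<or> B k j = 0" using u bA bB unfolding band_def by blast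
      then show "A i k * B k j = 0" by auto
    qed
  qed simp
  then show ?thesis by simp
qed

lemma act_add: "rowfin A \<Longrightarrow> rowfin B \<Longrightarrow> act (\<lambda>i j. A i j + B i j) v i = act A v i + act B v i"
  by (rule act_comb(1))
lemma act_diff: "rowfin A \<Longrightarrow> rowfin B \<Longrightarrow> act (\<lambda>i j. A i j - B i j) v i = act A v i - act B v i"
  by (rule act_comb(2))
lemma act_scale: "rowfin A \<Longrightarrow> act (\<lambda>i j. c * A i j) v i = smult c (act A v i)"
  by (rule act_comb(3)) auto
lemma rowfin_add: "rowfin A \<Longrightarrow> rowfin B \<Longrightarrow> rowfin (\<lambda>i j. A i j + B i j)"
  by (rule rowfin_comb(1))
lemma rowfin_diff: "rowfin A \<Longrightarrow> rowfin B \<Longrightarrow> rowfin (\<lambda>i j. A i j - B i j)"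
  by (rule rowfin_comb(2))
lemma rowfin_scale: "rowfin A \<Longrightarrow> rowfin (\<lambda>i j. c * A i j)"
  by (rule rowfin_comb(3)) auto

lemma main_E:
  fixes c2 c3 :: "'a::field_char_0"
    and P :: "nat \<Rightarrow> 'a poly"
    and \<beta> \<gamma> \<beta>' \<gamma>' :: "nat \<Rightarrow> 'a"
  assumes recP: "ttrr P \<beta> \<gamma>"
    and recQ: "ttrr (\<lambda>n. Pprime c2 c3 P (Suc n)) \<beta>' \<gamma>'"
  defines "L \<equiv> tridiag \<beta> \<gamma>" and "M \<equiv> tridiag \<beta>' \<gamma>'" and "D \<equiv> (Dmat :: 'a imat)"
  shows "imult (imult L L) D i j - 2 * imult (imult L D) M i j + imult (imult D M) M i j
            - (1/2) * (imult L D i j + imult D M i j)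
            + (c3 + 1/16 - c2^2/4) * D i j = 0"
proof -
  define Q where "Q = (\<lambda>n. Pprime c2 c3 P (Suc n))"
  define X where "X = [:0, 1::'a:]"
  define E where "E = (\<lambda>i j. imult (imult L L) D i j - 2 * imult (imult L D) M i j + imult (imult D M) M i j
            - (1/2) * (imult L D i j + imult D M i j)
            + (c3 + 1/16 - c2^2/4) * D i j)"
  have bL: "band (-1) 1 L" and bM: "band (-1) 1 M" and bD: "band 1 1 D"
    unfolding L_def M_def D_def by (rule band_tridiag band_Dmat)+
  have rL: "rowfin L" and rM: "rowfin M" and rD: "rowfin D"
    using band_rowfin[OF bL] band_rowfin[OF bM] band_rowfin[OF bD] by auto
  have rLL: "rowfin (imult L L)" and rLD: "rowfin (imult L D)" and rDM: "rowfin (imult D M)"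
    using rL rM rD by (simp_all add: rowfin_imult)
  have rLLD: "rowfin (imult (imult L L) D)" and rLDM: "rowfin (imult (imult L D) M)"
    and rDMM: "rowfin (imult (imult D M) M)"
    using rLL rLD rDM rM rD by (simp_all add: rowfin_imult)
  have monQ: "monic_seq Q" unfolding Q_def by (rule ttrr_monic[OF recQ])
  have P0: "P 0 = 1" using recP by (simp add: ttrr_def)
  have F1: "act L P = (\<lambda>i. X * P i)"
  proof
    fix i show "act L P i = X * P i"
      using recP unfolding L_def X_def act_tridiag ttrr_def by simp
  qed
  have F2: "act M Q = (\<lambda>i. X * Q i)"
  proof
    fix i show "act M Q i = X * Q i"
      using recQ unfolding M_def X_def act_tridiag ttrr_def Q_def by simp
  qed
  have F3: "act D Q = (\<lambda>i. Ddiff c2 c3 (P i))"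
  proof
    fix i show "act D Q i = Ddiff c2 c3 (P i)"
    proof (cases i)
      case 0 then show ?thesis by (simp add: D_def act_Dmat P0 Ddiff_one)
    next
      case (Suc n)
      have "act D Q i = smult (of_nat (Suc n)) (smult (1 / of_nat (Suc n)) (Ddiff c2 c3 (P (Suc n))))"
        by (simp add: D_def act_Dmat Suc Q_def Pprime_def)
      also have "\<dots> = Ddiff c2 c3 (P i)"
        by (simp only: smult_smult Suc) (simp del: of_nat_Suc)
      finally show ?thesis .
    qed
  qed
  have H1: "act L (\<lambda>k. Ddiff c2 c3 (P k)) = (\<lambda>k. Ddiff c2 c3 (X * P k))"
    by (rule ext) (simp add: act_Ddiff F1)
  have G1: "act (imult (imult L L) D) Q i = Ddiff c2 c3 (X * (X * P i))" for i
  proof -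
    have "act (imult (imult L L) D) Q i = act L (act L (act D Q)) i"
      by (simp add: act_imult rLL rD rL)
    also have "\<dots> = act L (\<lambda>k. Ddiff c2 c3 (X * P k)) i" by (simp add: F3 H1)
    also have "\<dots> = Ddiff c2 c3 (X * (X * P i))" by (simp add: act_Ddiff act_mult F1)
    finally show ?thesis .
  qed
  have G4: "act (imult L D) Q i = Ddiff c2 c3 (X * P i)" for i
    by (simp add: act_imult rL rD F3 H1)
  have G2: "act (imult (imult L D) M) Q i = X * Ddiff c2 c3 (X * P i)" for i
    by (simp add: act_imult[OF rLD rM] F2 act_mult G4)
  have G6: "act D Q i = Ddiff c2 c3 (P i)" for i by (simp add: F3)
  have G5: "act (imult D M) Q i = X * Ddiff c2 c3 (P i)" for i
    by (simp add: act_imult[OF rD rM] F2 act_mult G6)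
  have G3: "act (imult (imult D M) M) Q i = X * (X * Ddiff c2 c3 (P i))" for i
    by (simp add: act_imult[OF rDM rM] F2 act_mult G5)
  have actE: "act E Q i = 0" for i
  proof -
    have "act E Q i = act (imult (imult L L) D) Q i - smult 2 (act (imult (imult L D) M) Q i)
       + act (imult (imult D M) M) Q i - smult (1/2) (act (imult L D) Q i + act (imult D M) Q i)
       + smult (c3 + 1/16 - c2^2/4) (act D Q i)"
      unfolding E_def
      by (simp only: act_add act_diff act_scale rowfin_add rowfin_diff rowfin_scale rLLD rLDM rDMM rLD rDM rD)
    also have "\<dots> = 0"
      unfolding G1 G2 G3 G4 G5 G6 X_def by (rule Ddiff_identity)
    finally show ?thesis .
  qed
  have rE: "rowfin E" unfolding E_def
    by (simp only: rowfin_add rowfin_diff rowfin_scale rLLD rLDM rDMM rLD rDM rD)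
  have "E i j = 0"
  proof -
    have "finite (supp E i)" using rE by (simp add: rowfin_def)
    then obtain N where N: "supp E i \<subseteq> {..<N}" using finite_nat_bounded by blast
    have s0: "(\<Sum>k<N. smult (E i k) (Q k)) = 0" using act_sup[OF _ N, of Q] actE[of i] by simp
    show ?thesis
    proof (cases "j < N")
      case True then show ?thesis using indep[OF monQ s0] by blast
    next
      case False then show ?thesis using N by (auto simp: supp_def)
    qed
  qed
  then show ?thesis by (simp add: E_def)
qed



theorem theorem3p3:
  fixes c2 c3 :: "'a::field_char_0"
    and P :: "nat \<Rightarrow> 'a poly"
    and \<beta> \<gamma> \<beta>' \<gamma>' :: "nat \<Rightarrow> 'a"
  assumes monP: "monic_seq P"
    and recP: "ttrr P \<beta> \<gamma>"
    and gam: "\<forall>n\<ge>1. \<gamma> n \<noteq> 0"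
    and recQ: "ttrr (\<lambda>n. Pprime c2 c3 P (Suc n)) \<beta>' \<gamma>'"
  shows "classical c2 c3 P \<longleftrightarrow>
    (let L = tridiag \<beta> \<gamma>; M = tridiag \<beta>' \<gamma>'; D = Dmat in
     (\<forall>i j. imult (imult L L) D i j - 2 * imult (imult L D) M i j + imult (imult D M) M i j
            - (1/2) * (imult L D i j + imult D M i j)
            + (c3 + 1/16 - c2^2/4) * D i j = 0))"
proof -
  define L where "L = tridiag \<beta> \<gamma>"
  define M where "M = tridiag \<beta>' \<gamma>'"
  define D where "D = (Dmat :: 'a imat)"
  have E0: "imult (imult L L) D i j - 2 * imult (imult L D) M i j + imult (imult D M) M i j
            - (1/2) * (imult L D i j + imult D M i j)
            + (c3 + 1/16 - c2^2/4) * D i j = 0" for i j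
    unfolding L_def M_def D_def by (rule main_E[OF recP recQ])
  have bL: "band (-1) 1 L" and bM: "band (-1) 1 M" and bD: "band 1 1 D"
    unfolding L_def M_def D_def by (rule band_tridiag band_Dmat)+
  have bLL: "band (-2) 2 (imult L L)" using band_imult[OF bL bL] by simp
  have bLD: "band 0 2 (imult L D)" using band_imult[OF bL bD] by simp
  have bDM: "band 0 2 (imult D M)" using band_imult[OF bD bM] by simp
  have gnz: "\<gamma>' n \<noteq> 0" if n1: "n \<ge> 1" for n
  proof
    assume g0: "\<gamma>' n = 0"
    obtain m where n: "n = Suc m" using n1 by (cases n) auto
    have Mv: "M (Suc m) m = \<gamma>' (Suc m)" by (simp add: M_def tridiag_def)
    have LL: "imult L L (m+3) (m+1) = \<gamma> (m+3) * \<gamma> (m+2)"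
      apply (subst imult_single[OF bL bL, where l="m+2"])
       apply (simp_all add: L_def tridiag_def)
      apply ((intro allI impI, arith)+)?
      done
    have LLD: "imult (imult L L) D (m+3) m = \<gamma> (m+3) * \<gamma> (m+2) * of_nat (m+1)"
      apply (subst imult_single[OF bLL bD, where l="m+1"])
       apply (simp_all add: LL[simplified] D_def Dmat_def)
      apply ((intro allI impI, arith)+)?
      done
    have LD: "imult L D (m+3) (m+1) = \<gamma> (m+3) * of_nat (m+2)"
      apply (subst imult_single[OF bL bD, where l="m+2"])
       apply (simp_all add: L_def tridiag_def D_def Dmat_def)
      apply ((intro allI impI, arith)+)?
      done
    have LDM: "imult (imult L D) M (m+3) m = \<gamma> (m+3) * of_nat (m+2) * \<gamma>' (m+1)"
      apply (subst imult_single[OF bLD bM, where l="m+1"])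
       apply (simp_all add: LD[simplified] M_def tridiag_def)
      apply ((intro allI impI, arith)+)?
      done
    have DM: "imult D M (m+3) (m+1) = of_nat (m+3) * \<gamma>' (m+2)"
      apply (subst imult_single[OF bD bM, where l="m+2"])
       apply (simp_all add: M_def tridiag_def D_def Dmat_def)
      apply ((intro allI impI, arith)+)?
      done
    have DMM: "imult (imult D M) M (m+3) m = of_nat (m+3) * \<gamma>' (m+2) * \<gamma>' (m+1)"
      apply (subst imult_single[OF bDM bM, where l="m+1"])
       apply (simp_all add: DM[simplified] Mv)
      apply ((intro allI impI, arith)+)?
      done
    have LD0: "imult L D (m+3) m = 0" by (rule band_zero[OF bLD]) simp
    have DM0: "imult D M (m+3) m = 0" by (rule band_zero[OF bDM]) simp
    have D0: "D (m+3) m = 0" by (simp add: D_def Dmat_def)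
    have g1: "\<gamma>' (m+1) = 0" using g0 n by simp
    have "\<gamma> (m+3) * \<gamma> (m+2) * of_nat (m+1) = 0"
      using E0[of "m+3" m] unfolding LLD LDM DMM LD0 DM0 D0 g1 by simp
    moreover have "\<gamma> (m+3) \<noteq> 0" "\<gamma> (m+2) \<noteq> 0" using gam by auto
    moreover have "(of_nat (Suc m) :: 'a) \<noteq> 0" by (rule of_nat_neq_0)
    ultimately show False by simp
  qed
  have cl: "classical c2 c3 P"
    unfolding classical_def orthogonal_seq_def
    using ttrr_monic[OF recQ] recQ gnz by blast
  show ?thesis using cl E0 unfolding L_def M_def D_def Let_def by simp
qed


end
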